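(* Let $a\in\mathbb{Q}\setminus\{-1,0,1\}$ and let $z\in\mathbb{C}$ with $|z|\le1$. For any positive real numbers $\xi<x$, \begin{multline*} \sum_{\substack{p\le x \\ \nu_p(a)=0}} z^{\Omega((p-1)/\mathrm{ord}_p(a))} = \sum_{\ell\mid Q_\xi} z^{\Omega(\ell)} (1-z^{-1})^{\omega(\ell)} \#\{ p\le x : \nu_p(a)=0,\ \ell \mid (p-1)/\mathrm{ord}_p(a) \} \\ + O\biggl( \sum_{\xi<q^k\le x} \#\{ p\le x : \nu_p(a)=0,\ q^k \mid (p-1)/\mathrm{ord}_p(a) \} \biggr), \end{multline*} with an absolute implied constant, where the error sum is over prime powers $q^k$ ($k\ge1$) in $(\xi,x]$.
   Context: $p,q$ denote primes. $\nu_p(a)$ is the $p$-adic valuation of $a$; $\mathrm{ord}_p(a)$ is the multiplicative order of $a$ mod $p$; $\omega,\Omega$ count prime factors without/with multiplicity. For $\xi>0$, $Q_\xi$ is the least common multiple of all positive integers $\le\xi$. The expression $z^{\Omega(\ell)}(1-z^{-1})^{\omega(\ell)}$ means the polynomial $z^{\Omega(\ell)-\omega(\ell)}(z-1)^{\omega(\ell)}$ (relevant at $z=0$), and $0^0=1$. *)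

theory Defs
  imports "HOL-Analysis.Analysis" "HOL-Number_Theory.Number_Theory"
begin

definition nu_rat :: "nat \<Rightarrow> rat \<Rightarrow> int" where
  "nu_rat p a = (let (n, d) = quotient_of a in
      int (multiplicity (int p) n) - int (multiplicity (int p) d))"

(* multiplicative order of a = n/d modulo p (for p not dividing n d):
   least k > 0 with (n/d)^k = 1 mod p, i.e. n^k = d^k mod p *)
definition ord_rat :: "nat \<Rightarrow> rat \<Rightarrow> nat" where
  "ord_rat p a = (let (n, d) = quotient_of a in
      (LEAST k. 0 < k \<and> [n ^ k = d ^ k] (mod int p)))"

definition omega_nat :: "nat \<Rightarrow> nat" where
  "omega_nat n = card (prime_factors n)"

definition Omega_nat :: "nat \<Rightarrow> nat" where
  "Omega_nat n = size (prime_factorization n)"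

definition Q_lcm :: "real \<Rightarrow> nat" where
  "Q_lcm xi = Lcm {1..nat \<lfloor>xi\<rfloor>}"

(* z^Omega(l) (1 - 1/z)^omega(l), read as the polynomial z^(Omega-omega) (z-1)^omega *)
definition wt :: "complex \<Rightarrow> nat \<Rightarrow> complex" where
  "wt z l = z ^ (Omega_nat l - omega_nat l) * (z - 1) ^ omega_nat l"

definition cnt :: "rat \<Rightarrow> real \<Rightarrow> nat \<Rightarrow> nat" where
  "cnt a x m = card {p. prime p \<and> real p \<le> x \<and> nu_rat p a = 0
                      \<and> m dvd ((p - 1) div ord_rat p a)}"

end

theory Submission
  imports Defs
begin


lemma omega_le_Omega: "omega_nat n \<le> Omega_nat n"
proof -
  have "\<And>M::nat multiset. card (set_mset M) \<le> size M"
  proof -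
    fix M :: "nat multiset"
    show "card (set_mset M) \<le> size M"
      by (induction M) (auto simp: card_insert_if)
  qed
  then show ?thesis unfolding omega_nat_def Omega_nat_def by blast
qed

lemma fermat_int: fixes p::nat and n::int assumes "prime p" "\<not> int p dvd n"
  shows "[n^(p-1) = 1] (mod int p)"
proof -
  define m where "m = nat (n mod int p)"
  have p0: "int p > 0" using assms(1) prime_gt_0_nat by simp
  have im: "int m = n mod int p" unfolding m_def using p0 by simp
  have "\<not> p dvd m"
  proof
    assume "p dvd m"
    then have "int p dvd int m" by simp
    then have "int p dvd n mod int p" using im by simp
    then show False using assms(2) by (simp add: dvd_mod_iff)
  qed
  then have "[m^(p-1) = 1] (mod p)" using fermat_theorem assms(1) by blast
  then have "[int m^(p-1) = 1] (mod int p)"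
    by (metis cong_int_iff of_nat_1 of_nat_power)
  moreover have "[int m = n] (mod int p)" using im by (simp add: cong_def)
  ultimately show ?thesis by (meson cong_pow cong_sym cong_trans)
qed

lemma gcd_cop: fixes a b d1 d2 :: nat assumes "coprime a b" "d1 dvd a" "d2 dvd b"
  shows "gcd (d1*d2) a = d1"
  by (metis assms(1,2,3) coprime_mult_right_iff dvd_mult_div_cancel
    gcd_mult_left_right_cancel gcd_nat.order_iff)

lemma gcd_split: fixes a b d :: nat assumes "coprime a b" "d dvd a*b"
  shows "d = gcd d a * gcd d b"
  by (smt (verit, ccfv_SIG) assms(1,2) coprime_mult_right_iff
    division_decomp dvd_mult_div_cancel gcd.commute
    gcd_mult_right_left_cancel gcd_mult_right_right_cancel
    gcd_nat.absorb_iff2 is_unit_gcd)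

lemma sum_divisors_coprime:
  fixes a b :: nat and f :: "nat \<Rightarrow> 'a::comm_monoid_add"
  assumes "coprime a b" "a > 0" "b > 0"
  shows "(\<Sum>d\<in>{d. d dvd a*b}. f d) = (\<Sum>d1\<in>{d. d dvd a}. \<Sum>d2\<in>{d. d dvd b}. f (d1*d2))"
proof -
  have fa: "finite {d. d dvd a}" using assms by simp
  have fb: "finite {d. d dvd b}" using assms by simp
  have "(\<Sum>d1\<in>{d. d dvd a}. \<Sum>d2\<in>{d. d dvd b}. f (d1*d2))
      = (\<Sum>(d1,d2)\<in>{d. d dvd a} \<times> {d. d dvd b}. f (d1*d2))"
    by (rule sum.cartesian_product)
  also have "\<dots> = (\<Sum>d\<in>{d. d dvd a*b}. f d)"
  proof -
    have bij: "bij_betw (\<lambda>(d1,d2). d1*d2) ({d. d dvd a} \<times> {d. d dvd b}) {d. d dvd a*b}"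
    proof (rule bij_betwI')
      fix x y assume "x \<in> {d. d dvd a} \<times> {d. d dvd b}" "y \<in> {d. d dvd a} \<times> {d. d dvd b}"
      then obtain x1 x2 y1 y2 where xy: "x = (x1,x2)" "y = (y1,y2)" "x1 dvd a" "x2 dvd b" "y1 dvd a" "y2 dvd b"
        by auto
      show "((case x of (d1,d2) \<Rightarrow> d1*d2) = (case y of (d1,d2) \<Rightarrow> d1*d2)) = (x = y)"
      proof
        assume h: "(case x of (d1,d2) \<Rightarrow> d1*d2) = (case y of (d1,d2) \<Rightarrow> d1*d2)"
        then have e: "x1*x2 = y1*y2" using xy by simp
        have 1: "x1 = y1" using gcd_cop[OF assms(1) xy(3,4)] gcd_cop[OF assms(1) xy(5,6)] e by simp
        have cb: "coprime b a" using assms(1) by (simp add: coprime_commute)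
        have 2: "x2 = y2" using gcd_cop[OF cb xy(4,3)] gcd_cop[OF cb xy(6,5)] e by (simp add: mult.commute)
        show "x = y" using 1 2 xy by simp
      qed simp
    next
      fix x assume "x \<in> {d. d dvd a} \<times> {d. d dvd b}"
      then show "(case x of (d1,d2) \<Rightarrow> d1*d2) \<in> {d. d dvd a*b}" by (auto intro: mult_dvd_mono)
    next
      fix d assume "d \<in> {d. d dvd a*b}"
      then have "d = gcd d a * gcd d b" using gcd_split assms(1) by blast
      then show "\<exists>x\<in>{d. d dvd a} \<times> {d. d dvd b}. d = (case x of (d1,d2) \<Rightarrow> d1*d2)"
        by (intro bexI[of _ "(gcd d a, gcd d b)"]) auto
    qed
    have "(\<Sum>(d1,d2)\<in>{d. d dvd a} \<times> {d. d dvd b}. f (d1*d2)) = (\<Sum>x\<in>{d. d dvd a} \<times> {d. d dvd b}. f ((\<lambda>(d1,d2). d1*d2) x))"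
      by (intro sum.cong) auto
    also have "\<dots> = (\<Sum>d\<in>{d. d dvd a*b}. f d)" by (rule sum.reindex_bij_betw[OF bij])
    finally show ?thesis .
  qed
  finally show ?thesis by simp
qed

lemma Omega_mult: "a \<noteq> 0 \<Longrightarrow> b \<noteq> 0 \<Longrightarrow> Omega_nat (a*b) = Omega_nat a + Omega_nat b"
  unfolding Omega_nat_def by (simp add: prime_factorization_mult)

lemma omega_mult: assumes "coprime a b" "a \<noteq> 0" "b \<noteq> 0"
  shows "omega_nat (a*b) = omega_nat a + omega_nat b"
proof -
  have d: "prime_factors a \<inter> prime_factors b = {}"
  proof (rule ccontr)
    assume "prime_factors a \<inter> prime_factors b \<noteq> {}"
    then obtain q where q: "q \<in> prime_factors a" "q \<in> prime_factors b" by blast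
    then have "prime q" "q dvd a" "q dvd b" by auto
    then show False using assms(1)
      by (metis coprime_common_divisor not_prime_unit)
  qed
  show ?thesis unfolding omega_nat_def
    using prime_factors_product[OF assms(2,3)] d by (simp add: card_Un_disjoint)
qed

lemma wt_mult: assumes "coprime a b" "a \<noteq> 0" "b \<noteq> 0"
  shows "wt z (a*b) = wt z a * wt z b"
proof -
  have "Omega_nat (a*b) - omega_nat (a*b) = (Omega_nat a - omega_nat a) + (Omega_nat b - omega_nat b)"
    using Omega_mult[OF assms(2,3)] omega_mult[OF assms] omega_le_Omega[of a] omega_le_Omega[of b] by simp
  then show ?thesis unfolding wt_def using omega_mult[OF assms]
    by (simp add: power_add)
qed

lemma wt_primepow: assumes "prime q" shows "wt z (q^j) = (if j = 0 then 1 else z^(j-1) * (z-1))"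
proof -
  have "Omega_nat (q^j) = j" unfolding Omega_nat_def using assms by (simp add: prime_factorization_prime_power)
  moreover have "omega_nat (q^j) = (if j = 0 then 0 else 1)" unfolding omega_nat_def using assms
    by (simp add: prime_factorization_prime_power)
  ultimately show ?thesis unfolding wt_def by simp
qed

lemma sum_wt_primepow: assumes "prime q" shows "(\<Sum>l\<in>{l. l dvd q^k}. wt z l) = z^k"
proof -
  have "{l. l dvd q^k} = (\<lambda>j. q^j) ` {..k}"
    using divides_primepow_nat[OF assms] by auto
  moreover have "inj_on (\<lambda>j. q^j) {..k}"
    using assms prime_gt_1_nat by (auto intro!: inj_onI simp: power_inject_exp)
  ultimately have "(\<Sum>l\<in>{l. l dvd q^k}. wt z l) = (\<Sum>j\<le>k. wt z (q^j))"
    by (simp add: sum.reindex)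
  also have "\<dots> = z^k"
  proof (induction k)
    case 0
    have "wt z 1 = 1" by (simp add: wt_def omega_nat_def Omega_nat_def)
    then show ?case by simp
  next
    case (Suc k)
    have "(\<Sum>j\<le>Suc k. wt z (q^j)) = z^k + z^k*(z-1)"
      using Suc wt_primepow[OF assms, of z "Suc k"] by simp
    also have "\<dots> = z^Suc k" by (simp add: algebra_simps)
    finally show ?case .
  qed
  finally show ?thesis .
qed

lemma sum_wt: fixes g :: nat assumes "g > 0" shows "(\<Sum>l\<in>{l. l dvd g}. wt z l) = z ^ Omega_nat g"
  using assms
proof (induction g rule: less_induct)
  case (less g)
  show ?case
  proof (cases "g = 1")
    case True
    have "{l. l dvd (1::nat)} = {1}" by auto
    then show ?thesis using True by (simp add: wt_def omega_nat_def Omega_nat_def)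
  next
    case False
    then obtain q where q: "prime q" "q dvd g" using prime_factor_nat by blast
    define k where "k = multiplicity q g"
    define r where "r = g div q^k"
    have g0: "g \<noteq> 0" using less.prems by simp
    have nu: "\<not> is_unit q" using q(1) not_prime_unit by blast
    have qkd: "q^k dvd g" unfolding k_def by (rule multiplicity_dvd)
    have gr: "g = q^k * r" unfolding r_def using qkd by simp
    have nd: "\<not> q dvd r" unfolding r_def k_def by (rule multiplicity_decompose[OF g0 nu])
    have "multiplicity q g = 0 \<longleftrightarrow> \<not> q dvd g" by (rule multiplicity_eq_zero_iff[OF g0 nu])
    then have k1: "k \<ge> 1" unfolding k_def using q(2) by linarith
    have r0: "r > 0" using gr g0 by (cases "r = 0") auto
    have q1: "q > 1" using q(1) by (rule prime_gt_1_nat)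
    have qk: "q^k > 1" using q1 k1 by (intro one_less_power) auto
    have "1*r < q^k*r" using qk r0 by (intro mult_strict_right_mono) auto
    then have rl: "r < g" using gr by simp
    have cq: "coprime q r" using prime_imp_coprime[OF q(1) nd] .
    have cop: "coprime (q^k) r" using cq by simp
    have qk0: "q^k > 0" using qk by linarith
    have "(\<Sum>l\<in>{l. l dvd g}. wt z l) = (\<Sum>l\<in>{l. l dvd q^k*r}. wt z l)" using gr by metis
    also have "\<dots> = (\<Sum>d1\<in>{d. d dvd q^k}. \<Sum>d2\<in>{d. d dvd r}. wt z (d1*d2))"
      by (rule sum_divisors_coprime[OF cop qk0 r0])
    also have "\<dots> = (\<Sum>d1\<in>{d. d dvd q^k}. \<Sum>d2\<in>{d. d dvd r}. wt z d1 * wt z d2)"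
    proof (intro sum.cong refl)
      fix d1 d2 assume "d1 \<in> {d. d dvd q^k}" "d2 \<in> {d. d dvd r}"
      then have h: "d1 dvd q^k" "d2 dvd r" by auto
      then have "coprime d1 d2" using cop coprime_divisors by blast
      moreover have "d1 \<noteq> 0" using h(1) qk0 by (metis dvd_0_left_iff less_irrefl)
      moreover have "d2 \<noteq> 0" using h(2) r0 by (metis dvd_0_left_iff less_irrefl)
      ultimately show "wt z (d1*d2) = wt z d1 * wt z d2" using wt_mult by blast
    qed
    also have "\<dots> = (\<Sum>d1\<in>{d. d dvd q^k}. wt z d1) * (\<Sum>d2\<in>{d. d dvd r}. wt z d2)"
      by (rule sum_product[symmetric])
    also have "\<dots> = z^k * z^Omega_nat r" using sum_wt_primepow[OF q(1)] less.IH[OF rl r0] by simp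
    also have "\<dots> = z ^ Omega_nat g"
    proof -
      have "Omega_nat (q^k) = k" unfolding Omega_nat_def using q(1) by (simp add: prime_factorization_prime_power)
      moreover have "Omega_nat (q^k*r) = Omega_nat (q^k) + Omega_nat r"
        by (rule Omega_mult) (use qk0 r0 in auto)
      ultimately have "Omega_nat g = k + Omega_nat r" using gr by metis
      then show ?thesis by (simp add: power_add)
    qed
    finally show ?thesis .
  qed
qed



lemma ord_props:
  fixes p :: nat and a :: rat
  assumes p: "prime p" and nu: "nu_rat p a = 0" and a0: "a \<noteq> 0"
  shows "0 < ord_rat p a \<and> ord_rat p a \<le> p - 1"
proof -
  obtain n d where qd: "quotient_of a = (n, d)" by (cases "quotient_of a") auto
  have d0: "d > 0" using quotient_of_denom_pos[OF qd] .
  have cnd: "coprime n d" using quotient_of_coprime[OF qd] .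
  have n0: "n \<noteq> 0" using quotient_of_div[OF qd] a0 by auto
  have pi: "prime (int p)" using p by simp
  have nui: "\<not> is_unit (int p)" using pi not_prime_unit by blast
  have eq: "multiplicity (int p) n = multiplicity (int p) d"
    using nu qd unfolding nu_rat_def by simp
  have ndvd: "\<not> int p dvd n \<and> \<not> int p dvd d"
  proof (cases "multiplicity (int p) n = 0")
    case True
    then show ?thesis using eq multiplicity_eq_zero_iff[OF n0 nui] multiplicity_eq_zero_iff[of d "int p"] d0 nui
      by auto
  next
    case False
    then have "int p dvd n" using multiplicity_eq_zero_iff[OF n0 nui] by auto
    moreover have "int p dvd d" using False eq multiplicity_eq_zero_iff[of d "int p"] d0 nui by auto
    ultimately have False using cnd pi by (metis coprime_common_divisor not_prime_unit)
    then show ?thesis ..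
  qed
  have f1: "[n^(p-1) = 1] (mod int p)" using fermat_int p ndvd by blast
  have f2: "[d^(p-1) = 1] (mod int p)" using fermat_int p ndvd by blast
  have c: "[n^(p-1) = d^(p-1)] (mod int p)" using f1 f2 by (meson cong_sym cong_trans)
  have p1: "0 < p - 1" using prime_gt_1_nat[OF p] by simp
  have ex: "0 < p - 1 \<and> [n^(p-1) = d^(p-1)] (mod int p)" using c p1 by simp
  have o: "ord_rat p a = (LEAST k. 0 < k \<and> [n ^ k = d ^ k] (mod int p))"
    unfolding ord_rat_def using qd by simp
  show ?thesis unfolding o
    using LeastI[of "\<lambda>k. 0 < k \<and> [n ^ k = d ^ k] (mod int p)", OF ex]
      Least_le[of "\<lambda>k. 0 < k \<and> [n ^ k = d ^ k] (mod int p)", OF ex] by simp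
qed

lemma card_as_sum:
  assumes "finite S"
  shows "(\<Sum>p\<in>S. if P p then (c::'a::comm_semiring_1) else 0) = of_nat (card {p\<in>S. P p}) * c"
proof -
  have "(\<Sum>p\<in>S. if P p then c else 0) = (\<Sum>p\<in>{p\<in>S. P p}. c)"
    using sum.inter_filter[OF assms, of "\<lambda>_. c" P] by simp
  also have "\<dots> = of_nat (card {p\<in>S. P p}) * c" by simp
  finally show ?thesis .
qed

lemma fin_le: "finite {n::nat. real n \<le> x \<and> Q n}"
proof -
  have "{n::nat. real n \<le> x \<and> Q n} \<subseteq> {..nat \<lfloor>x\<rfloor>}"
  proof
    fix n assume "n \<in> {n::nat. real n \<le> x \<and> Q n}"
    then have "real n \<le> x" by simp
    then have "int n \<le> \<lfloor>x\<rfloor>" by (simp add: le_floor_iff)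
    then show "n \<in> {..nat \<lfloor>x\<rfloor>}" by simp
  qed
  then show ?thesis using finite_subset by blast
qed



theorem proposition2p5:
  "\<exists>C::real. \<forall>(a::rat) (z::complex) (\<xi>::real) (x::real).
     a \<notin> {-1, 0, 1} \<longrightarrow> norm z \<le> 1 \<longrightarrow> 0 < \<xi> \<longrightarrow> \<xi> < x \<longrightarrow>
     norm ((\<Sum>p\<in>{p. prime p \<and> real p \<le> x \<and> nu_rat p a = 0}.
               z ^ Omega_nat ((p - 1) div ord_rat p a))
           - (\<Sum>l\<in>{l. l dvd Q_lcm \<xi>}. wt z l * of_nat (cnt a x l)))
     \<le> C * (\<Sum>n\<in>{n::nat. primepow n \<and> \<xi> < real n \<and> real n \<le> x}. real (cnt a x n))"
proof (intro exI[of _ 2] allI impI)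
  fix a :: rat and z :: complex and \<xi> x :: real
  assume a: "a \<notin> {-1, 0, 1}" and z: "norm z \<le> 1" and \<xi>: "0 < \<xi>" and \<xi>x: "\<xi> < x"
  define S where "S = {p. prime p \<and> real p \<le> x \<and> nu_rat p a = 0}"
  define m where "m p = (p - 1) div ord_rat p a" for p
  define Q where "Q = Q_lcm \<xi>"
  define D where "D = {l. l dvd Q}"
  define P where "P = {n::nat. primepow n \<and> \<xi> < real n \<and> real n \<le> x}"
  have a0: "a \<noteq> 0" using a by auto
  have finS: "finite S" unfolding S_def using fin_le[of x "\<lambda>p. prime p \<and> nu_rat p a = 0"]
    by (simp add: conj_commute conj_left_commute)
  have finP: "finite P" unfolding P_def using fin_le[of x "\<lambda>n. primepow n \<and> \<xi> < real n"]
    by (simp add: conj_commute conj_left_commute)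
  have Q0: "Q > 0"
  proof -
    have "Lcm {1..nat \<lfloor>\<xi>\<rfloor>} \<noteq> 0" by (simp add: Lcm_0_iff_nat)
    then show ?thesis unfolding Q_def Q_lcm_def using neq0_conv by blast
  qed
  have finD: "finite D" unfolding D_def using Q0 by simp
  have mS: "1 \<le> m p \<and> m p < p" if "p \<in> S" for p
  proof -
    have p: "prime p" "nu_rat p a = 0" using that unfolding S_def by auto
    have o: "0 < ord_rat p a" "ord_rat p a \<le> p - 1" using ord_props[OF p a0] by auto
    have "ord_rat p a div ord_rat p a \<le> (p - 1) div ord_rat p a" using o(2) by (rule div_le_mono)
    then have "1 \<le> m p" using o(1) unfolding m_def by simp
    moreover have "m p \<le> p - 1" unfolding m_def by (rule div_le_dividend)
    moreover have "p > 0" using p(1) prime_gt_0_nat by blast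
    ultimately show ?thesis by linarith
  qed
  have cnt_eq: "cnt a x l = card {p\<in>S. l dvd m p}" for l
    unfolding cnt_def S_def m_def by (rule arg_cong[where f=card]) auto
  have stepA: "(\<Sum>l\<in>D. wt z l * of_nat (cnt a x l)) = (\<Sum>p\<in>S. z ^ Omega_nat (gcd Q (m p)))"
  proof -
    have "(\<Sum>l\<in>D. wt z l * of_nat (cnt a x l)) = (\<Sum>l\<in>D. \<Sum>p\<in>S. if l dvd m p then wt z l else 0)"
    proof (intro sum.cong refl)
      fix l
      show "wt z l * of_nat (cnt a x l) = (\<Sum>p\<in>S. if l dvd m p then wt z l else 0)"
        using card_as_sum[OF finS, of "\<lambda>p. l dvd m p" "wt z l"] cnt_eq[of l] by (simp add: mult.commute)
    qed
    also have "\<dots> = (\<Sum>p\<in>S. \<Sum>l\<in>D. if l dvd m p then wt z l else 0)" by (rule sum.swap)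
    also have "\<dots> = (\<Sum>p\<in>S. z ^ Omega_nat (gcd Q (m p)))"
    proof (intro sum.cong refl)
      fix p assume "p \<in> S"
      have "(\<Sum>l\<in>D. if l dvd m p then wt z l else 0) = (\<Sum>l\<in>{l\<in>D. l dvd m p}. wt z l)"
        using sum.inter_filter[OF finD, of "wt z" "\<lambda>l. l dvd m p"] by simp
      also have "{l\<in>D. l dvd m p} = {l. l dvd gcd Q (m p)}" unfolding D_def by auto
      also have "(\<Sum>l\<in>{l. l dvd gcd Q (m p)}. wt z l) = z ^ Omega_nat (gcd Q (m p))"
        by (rule sum_wt) (use Q0 in simp)
      finally show "(\<Sum>l\<in>D. if l dvd m p then wt z l else 0) = z ^ Omega_nat (gcd Q (m p))" .
    qed
    finally show ?thesis .
  qed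
  have term_bound: "norm (z ^ Omega_nat (m p) - z ^ Omega_nat (gcd Q (m p))) \<le> 2 * real (card {n\<in>P. n dvd m p})"
    if pS: "p \<in> S" for p
  proof (cases "m p dvd Q")
    case True
    then have "gcd Q (m p) = m p" using True by (simp add: gcd_proj2_if_dvd_nat)
    then show ?thesis by simp
  next
    case False
    have m0: "m p \<noteq> 0" using mS[OF pS] by simp
    have "\<not> (\<forall>q. prime q \<longrightarrow> multiplicity q (m p) \<le> multiplicity q Q)"
      using False multiplicity_le_imp_dvd[OF m0] by blast
    then obtain q where q: "prime q" "multiplicity q (m p) > multiplicity q Q"
      by (auto simp: not_le)
    define k where "k = multiplicity q (m p)"
    define n where "n = q ^ k"
    have nu: "\<not> is_unit q" using q(1) not_prime_unit by blast
    have Q0': "Q \<noteq> 0" using Q0 by simp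
    have ndm: "n dvd m p" unfolding n_def k_def by (rule multiplicity_dvd)
    have ndQ: "\<not> n dvd Q"
    proof
      assume "n dvd Q"
      then have "k \<le> multiplicity q Q" unfolding n_def using power_dvd_iff_le_multiplicity[OF Q0' nu] by blast
      then show False using q(2) unfolding k_def by simp
    qed
    have k0: "k > 0" unfolding k_def using q(2) by simp
    have pp: "primepow n" unfolding n_def primepow_def using q(1) k0 by blast
    have nle: "n \<le> m p" using ndm m0 by (simp add: dvd_imp_le)
    have "real p \<le> x" using pS unfolding S_def by simp
    then have nx: "real n \<le> x" using nle mS[OF pS] by linarith
    have n\<xi>: "\<xi> < real n"
    proof (rule ccontr)
      assume "\<not> \<xi> < real n"
      then have "real n \<le> \<xi>" by simp
      then have "int n \<le> \<lfloor>\<xi>\<rfloor>" by (simp add: le_floor_iff)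
      then have "n \<le> nat \<lfloor>\<xi>\<rfloor>" by simp
      moreover have "n \<ge> 1" using pp primepow_gt_Suc_0 by fastforce
      ultimately have "n \<in> {1..nat \<lfloor>\<xi>\<rfloor>}" by simp
      then have "n dvd Q" unfolding Q_def Q_lcm_def by (rule dvd_Lcm)
      then show False using ndQ by simp
    qed
    have "n \<in> {n\<in>P. n dvd m p}" unfolding P_def using pp nx n\<xi> ndm by simp
    then have ne: "{n\<in>P. n dvd m p} \<noteq> {}" by blast
    have "finite {n\<in>P. n dvd m p}" using finP by simp
    then have "card {n\<in>P. n dvd m p} \<ge> 1" using ne card_gt_0_iff by (metis One_nat_def Suc_leI)
    then have c1: "2 \<le> 2 * real (card {n\<in>P. n dvd m p})" by simp
    have "norm (z ^ Omega_nat (m p) - z ^ Omega_nat (gcd Q (m p)))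
          \<le> norm (z ^ Omega_nat (m p)) + norm (z ^ Omega_nat (gcd Q (m p)))" by (rule norm_triangle_ineq4)
    also have "\<dots> \<le> 1 + 1" using z
      by (intro add_mono) (simp_all add: norm_power power_le_one)
    finally show ?thesis using c1 by simp
  qed
  have "norm ((\<Sum>p\<in>S. z ^ Omega_nat (m p)) - (\<Sum>l\<in>D. wt z l * of_nat (cnt a x l)))
      = norm (\<Sum>p\<in>S. z ^ Omega_nat (m p) - z ^ Omega_nat (gcd Q (m p)))"
    using stepA by (simp add: sum_subtractf)
  also have "\<dots> \<le> (\<Sum>p\<in>S. norm (z ^ Omega_nat (m p) - z ^ Omega_nat (gcd Q (m p))))"
    by (rule norm_sum)
  also have "\<dots> \<le> (\<Sum>p\<in>S. 2 * real (card {n\<in>P. n dvd m p}))"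
    by (rule sum_mono) (rule term_bound)
  also have "\<dots> = 2 * (\<Sum>p\<in>S. \<Sum>n\<in>P. if n dvd m p then 1 else 0)"
    using card_as_sum[OF finP, where 'a=real] by (simp add: sum_distrib_left)
  also have "\<dots> = 2 * (\<Sum>n\<in>P. \<Sum>p\<in>S. if n dvd m p then 1 else 0)"
    by (simp add: sum.swap[of _ S])
  also have "\<dots> = 2 * (\<Sum>n\<in>P. real (cnt a x n))"
    using card_as_sum[OF finS, where 'a=real] cnt_eq by simp
  finally show "norm ((\<Sum>p\<in>{p. prime p \<and> real p \<le> x \<and> nu_rat p a = 0}.
               z ^ Omega_nat ((p - 1) div ord_rat p a))
           - (\<Sum>l\<in>{l. l dvd Q_lcm \<xi>}. wt z l * of_nat (cnt a x l)))
     \<le> 2 * (\<Sum>n\<in>{n::nat. primepow n \<and> \<xi> < real n \<and> real n \<le> x}. real (cnt a x n))"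
    unfolding S_def m_def D_def Q_def P_def .
qed

end
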